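(* In the setting described in the context, let $\{x_k\}_{k\geq 0}$ be the random iterates generated by UCDC$(x_0)$. Then for every $k$, $$\mathbf{E}[F(x_{k+1})-F^*\mid x_k]\leq \frac{1}{n}\big(H(x_k,T(x_k))-F^*\big)+\frac{n-1}{n}\big(F(x_k)-F^*\big).$$
   Context: Let $U\in\mathbf{R}^{N\times N}$ be a column permutation of the $N\times N$ identity matrix, partitioned as $U=[U_1,\dots,U_n]$ with $U_i\in\mathbf{R}^{N\times N_i}$, $\sum_i N_i=N$. For $x\in\mathbf{R}^N$ write $x^{(i)}=U_i^Tx\in\mathbf{R}^{N_i}$, so $x=\sum_i U_ix^{(i)}$. Each $\mathbf{R}^{N_i}$ carries the norm $\|t\|_{(i)}=\langle B_it,t\rangle^{1/2}$ and dual norm $\|t\|_{(i)}^*=\langle B_i^{-1}t,t\rangle^{1/2}$, where $B_i$ is positive definite. Consider minimizing $F(x)=f(x)+\Psi(x)$ over $\mathbf{R}^N$, where $f$ is convex and differentiable with block-coordinate Lipschitz gradient: there are constants $L_1,\dots,L_n>0$ with $\|\nabla_if(x+U_it)-\nabla_if(x)\|_{(i)}^*\leq L_i\|t\|_{(i)}$ for all $x\in\mathbf{R}^N$, $t\in\mathbf{R}^{N_i}$, $i$, where $\nabla_if(x)=U_i^T\nabla f(x)$; and $\Psi(x)=\sum_{i=1}^n\Psi_i(x^{(i)})$ with each $\Psi_i$ a proper closed convex extended-real-valued function. The problem is assumed to have a minimizer; $F^*$ is the optimal value. Let $L=\mathrm{Diag}(L_1,\dots,L_n)$ and $\|x\|_L=(\sum_i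 L_i\|x^{(i)}\|_{(i)}^2)^{1/2}$. Define $V_i(x,t)=\langle\nabla_if(x),t\rangle+\frac{L_i}{2}\|t\|_{(i)}^2+\Psi_i(x^{(i)}+t)$, $T^{(i)}(x)=\arg\min_{t\in\mathbf{R}^{N_i}}V_i(x,t)$, $T(x)=\sum_iU_iT^{(i)}(x)\in\mathbf{R}^N$, and $H(x,T)=f(x)+\langle\nabla f(x),T\rangle+\frac12\|T\|_L^2+\Psi(x+T)$. Algorithm UCDC$(x_0)$: for $k=0,1,2,\dots$, choose $i_k=i\in\{1,\dots,n\}$ uniformly at random (probability $1/n$ each, independently of the past) and set $x_{k+1}=x_k+U_iT^{(i)}(x_k)$. *)

theory Defs
  imports "HOL-Analysis.Analysis"
begin

text \<open>Blocks: the column permutation U of the identity partitioned into U_1..U_n is encoded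
by the block-assignment map blk of coordinates (blocks indexed 0..n-1). A vector t of R^{N_i}
is represented by U_i t, i.e. a vector of R^N supported on block i; x^{(i)} is represented by
U_i U_i^T x = bproj blk i x.  B i is an N x N matrix whose block (i,i) part is B_i.\<close>

definition blockvec :: "('N \<Rightarrow> nat) \<Rightarrow> nat \<Rightarrow> real^'N \<Rightarrow> bool" where
  "blockvec blk i t \<longleftrightarrow> (\<forall>j. blk j \<noteq> i \<longrightarrow> t $ j = 0)"

definition bproj :: "('N \<Rightarrow> nat) \<Rightarrow> nat \<Rightarrow> real^'N \<Rightarrow> real^'N" where
  "bproj blk i x = (\<chi> j. if blk j = i then x $ j else 0)"

definition bnorm :: "(nat \<Rightarrow> real^'N^'N) \<Rightarrow> nat \<Rightarrow> real^'N \<Rightarrow> real" where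
  "bnorm B i t = sqrt ((B i *v t) \<bullet> t)"

text \<open>dual block norm  ||s||*_(i) = <B_i^{-1} s, s>^(1/2); B_i^{-1} s is the unique block
vector v with B_i v = s (block part).\<close>
definition bdual :: "('N \<Rightarrow> nat) \<Rightarrow> (nat \<Rightarrow> real^'N^'N) \<Rightarrow> nat \<Rightarrow> real^'N \<Rightarrow> real" where
  "bdual blk B i s =
     sqrt ((THE v. blockvec blk i v \<and> bproj blk i (B i *v v) = s) \<bullet> s)"

definition Psi_sum :: "nat \<Rightarrow> ('N \<Rightarrow> nat) \<Rightarrow> (nat \<Rightarrow> real^'N \<Rightarrow> ereal) \<Rightarrow> real^'N \<Rightarrow> ereal" where
  "Psi_sum n blk Psi x = (\<Sum>i<n. Psi i (bproj blk i x))"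

definition Fobj :: "nat \<Rightarrow> ('N \<Rightarrow> nat) \<Rightarrow> (real^'N \<Rightarrow> real) \<Rightarrow> (nat \<Rightarrow> real^'N \<Rightarrow> ereal)
     \<Rightarrow> real^'N \<Rightarrow> ereal" where
  "Fobj n blk f Psi x = ereal (f x) + Psi_sum n blk Psi x"

definition Fstar :: "nat \<Rightarrow> ('N \<Rightarrow> nat) \<Rightarrow> (real^'N \<Rightarrow> real) \<Rightarrow> (nat \<Rightarrow> real^'N \<Rightarrow> ereal) \<Rightarrow> ereal" where
  "Fstar n blk f Psi = (INF x. Fobj n blk f Psi x)"

definition Vblk :: "('N \<Rightarrow> nat) \<Rightarrow> (nat \<Rightarrow> real^'N^'N) \<Rightarrow> (nat \<Rightarrow> real) \<Rightarrow> (real^'N \<Rightarrow> real^'N)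
     \<Rightarrow> (nat \<Rightarrow> real^'N \<Rightarrow> ereal) \<Rightarrow> nat \<Rightarrow> real^'N \<Rightarrow> real^'N \<Rightarrow> ereal" where
  "Vblk blk B L grad Psi i x t =
     ereal (bproj blk i (grad x) \<bullet> t + L i / 2 * (bnorm B i t)\<^sup>2) + Psi i (bproj blk i x + t)"

definition Tblk :: "('N \<Rightarrow> nat) \<Rightarrow> (nat \<Rightarrow> real^'N^'N) \<Rightarrow> (nat \<Rightarrow> real) \<Rightarrow> (real^'N \<Rightarrow> real^'N)
     \<Rightarrow> (nat \<Rightarrow> real^'N \<Rightarrow> ereal) \<Rightarrow> nat \<Rightarrow> real^'N \<Rightarrow> real^'N" where
  "Tblk blk B L grad Psi i x =
     (THE t. blockvec blk i t \<and>
        (\<forall>s. blockvec blk i s \<longrightarrow> Vblk blk B L grad Psi i x t \<le> Vblk blk B L grad Psi i x s))"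

definition Tfull :: "nat \<Rightarrow> ('N \<Rightarrow> nat) \<Rightarrow> (nat \<Rightarrow> real^'N^'N) \<Rightarrow> (nat \<Rightarrow> real) \<Rightarrow> (real^'N \<Rightarrow> real^'N)
     \<Rightarrow> (nat \<Rightarrow> real^'N \<Rightarrow> ereal) \<Rightarrow> real^'N \<Rightarrow> real^'N" where
  "Tfull n blk B L grad Psi x = (\<Sum>i<n. Tblk blk B L grad Psi i x)"

definition normL_sq :: "nat \<Rightarrow> ('N \<Rightarrow> nat) \<Rightarrow> (nat \<Rightarrow> real^'N^'N) \<Rightarrow> (nat \<Rightarrow> real) \<Rightarrow> real^'N \<Rightarrow> real" where
  "normL_sq n blk B L x = (\<Sum>i<n. L i * (bnorm B i (bproj blk i x))\<^sup>2)"

definition Hfun :: "nat \<Rightarrow> ('N \<Rightarrow> nat) \<Rightarrow> (nat \<Rightarrow> real^'N^'N) \<Rightarrow> (nat \<Rightarrow> real) \<Rightarrow> (real^'N \<Rightarrow> real)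
     \<Rightarrow> (real^'N \<Rightarrow> real^'N) \<Rightarrow> (nat \<Rightarrow> real^'N \<Rightarrow> ereal) \<Rightarrow> real^'N \<Rightarrow> real^'N \<Rightarrow> ereal" where
  "Hfun n blk B L f grad Psi x T =
     ereal (f x + grad x \<bullet> T + 1/2 * normL_sq n blk B L T) + Psi_sum n blk Psi (x + T)"

text \<open>Iterates of UCDC(x0) along a realisation idx of the random block choices i_0, i_1, ...\<close>
primrec ucdc :: "('N \<Rightarrow> nat) \<Rightarrow> (nat \<Rightarrow> real^'N^'N) \<Rightarrow> (nat \<Rightarrow> real) \<Rightarrow> (real^'N \<Rightarrow> real^'N)
     \<Rightarrow> (nat \<Rightarrow> real^'N \<Rightarrow> ereal) \<Rightarrow> real^'N \<Rightarrow> (nat \<Rightarrow> nat) \<Rightarrow> nat \<Rightarrow> real^'N" where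
  "ucdc blk B L grad Psi x0 idx 0 = x0"
| "ucdc blk B L grad Psi x0 idx (Suc k) =
     ucdc blk B L grad Psi x0 idx k + Tblk blk B L grad Psi (idx k) (ucdc blk B L grad Psi x0 idx k)"

end

theory Submission
  imports Defs
begin


lemma bproj_block: "blockvec blk i (bproj blk i x)"
  by (simp add: blockvec_def bproj_def)

lemma bproj_same: "blockvec blk i t \<Longrightarrow> bproj blk i t = t"
  by (auto simp: blockvec_def bproj_def vec_eq_iff)

lemma bproj_other: "blockvec blk i t \<Longrightarrow> j \<noteq> i \<Longrightarrow> bproj blk j t = 0"
  by (auto simp: blockvec_def bproj_def vec_eq_iff)

lemma bproj_add: "bproj blk i (x + y) = bproj blk i x + bproj blk i y"
  by (auto simp: bproj_def vec_eq_iff)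

lemma bproj_diff: "bproj blk i (x - y) = bproj blk i x - bproj blk i y"
  by (auto simp: bproj_def vec_eq_iff)

lemma bproj_scale: "bproj blk i (a *\<^sub>R x) = a *\<^sub>R bproj blk i x"
  by (auto simp: bproj_def vec_eq_iff)

lemma bproj_sum: "bproj blk i (sum g A) = (\<Sum>j\<in>A. bproj blk i (g j))"
  by (induction A rule: infinite_finite_induct) (auto simp: bproj_add, auto simp: bproj_def vec_eq_iff)

lemma blockvec_add: "blockvec blk i u \<Longrightarrow> blockvec blk i v \<Longrightarrow> blockvec blk i (u + v)"
  by (simp add: blockvec_def)
lemma blockvec_diff: "blockvec blk i u \<Longrightarrow> blockvec blk i v \<Longrightarrow> blockvec blk i (u - v)"
  by (simp add: blockvec_def)
lemma blockvec_scale: "blockvec blk i u \<Longrightarrow> blockvec blk i (a *\<^sub>R u)"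
  by (simp add: blockvec_def)
lemma blockvec_zero: "blockvec blk i 0"
  by (simp add: blockvec_def)

lemma inner_block: "blockvec blk i t \<Longrightarrow> g \<bullet> t = bproj blk i g \<bullet> t"
  by (auto simp: blockvec_def bproj_def inner_vec_def intro!: sum.cong)

lemma bproj_linear: "linear (bproj blk i)"
  by (rule linearI) (simp_all add: bproj_add bproj_scale)

lemma sum_bproj: "\<forall>j. blk j < n \<Longrightarrow> (\<Sum>i<n. bproj blk i x) = x"
proof -
  assume h: "\<forall>j. blk j < n"
  have "(\<Sum>i<n. bproj blk i x) $ j = x $ j" for j
  proof -
    have "(\<Sum>i<n. bproj blk i x) $ j = (\<Sum>i<n. if blk j = i then x $ j else 0)"
      by (simp add: bproj_def sum_component)
    also have "\<dots> = x $ j" using h by (simp add: sum.delta')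
    finally show ?thesis .
  qed
  then show ?thesis by (simp add: vec_eq_iff)
qed



definition symblk :: "('N::finite \<Rightarrow> nat) \<Rightarrow> nat \<Rightarrow> real^'N^'N \<Rightarrow> bool" where
  "symblk blk i M \<longleftrightarrow> (\<forall>j l. blk j = i \<longrightarrow> blk l = i \<longrightarrow> M $ j $ l = M $ l $ j)"

lemma Mv_sym:
  assumes S: "symblk blk i M" and u: "blockvec blk i u" and v: "blockvec blk i v"
  shows "(M *v u) \<bullet> v = (M *v v) \<bullet> u"
proof -
  have t: "M $ j $ l * u $ l * v $ j = M $ l $ j * u $ l * v $ j" for j l
    using S u v by (cases "blk j = i"; cases "blk l = i") (auto simp: symblk_def blockvec_def)
  have "(M *v u) \<bullet> v = (\<Sum>j\<in>UNIV. \<Sum>l\<in>UNIV. M $ j $ l * u $ l * v $ j)"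
    by (simp add: inner_vec_def matrix_vector_mult_def sum_distrib_right)
  also have "\<dots> = (\<Sum>j\<in>UNIV. \<Sum>l\<in>UNIV. M $ l $ j * u $ l * v $ j)" by (intro sum.cong refl t)
  also have "\<dots> = (\<Sum>l\<in>UNIV. \<Sum>j\<in>UNIV. M $ l $ j * v $ j * u $ l)"
    by (subst sum.swap) (simp add: mult_ac)
  also have "\<dots> = (M *v v) \<bullet> u"
    by (simp add: inner_vec_def matrix_vector_mult_def sum_distrib_right)
  finally show ?thesis .
qed

lemma Q_expand:
  assumes S: "symblk blk i M" and u: "blockvec blk i u" and v: "blockvec blk i v"
  shows "(M *v (a *\<^sub>R u + b *\<^sub>R v)) \<bullet> (a *\<^sub>R u + b *\<^sub>R v)
     = a^2 * ((M *v u) \<bullet> u) + 2 * a * b * ((M *v u) \<bullet> v) + b^2 * ((M *v v) \<bullet> v)"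
proof -
  have s: "(M *v v) \<bullet> u = (M *v u) \<bullet> v" using Mv_sym[OF S u v] by simp
  show ?thesis
    by (simp add: matrix_vector_right_distrib matrix_vector_mult_scaleR inner_add_left inner_add_right s
        power2_eq_square algebra_simps)
qed

lemma Q_cs:
  assumes S: "symblk blk i M" and u: "blockvec blk i u" and v: "blockvec blk i v"
    and pd: "\<forall>t. blockvec blk i t \<and> t \<noteq> 0 \<longrightarrow> (M *v t) \<bullet> t > 0"
  shows "(M *v u) \<bullet> v \<le> sqrt ((M *v u) \<bullet> u) * sqrt ((M *v v) \<bullet> v)"
proof (cases "u = 0 \<or> v = 0")
  case True then show ?thesis by auto
next
  case False
  have qu: "(M *v u) \<bullet> u > 0" and qv: "(M *v v) \<bullet> v > 0" using pd u v False by auto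
  define a where "a = sqrt ((M *v v) \<bullet> v)"
  define b where "b = sqrt ((M *v u) \<bullet> u)"
  have a2: "a^2 = (M *v v) \<bullet> v" using qv by (simp add: a_def)
  have b2: "b^2 = (M *v u) \<bullet> u" using qu by (simp add: b_def)
  have ap: "a > 0" "b > 0" using qu qv by (auto simp: a_def b_def)
  have "blockvec blk i (a *\<^sub>R u + (-b) *\<^sub>R v)" by (intro blockvec_add blockvec_scale u v)
  then have "0 \<le> (M *v (a *\<^sub>R u + (-b) *\<^sub>R v)) \<bullet> (a *\<^sub>R u + (-b) *\<^sub>R v)"
    using pd by (cases "a *\<^sub>R u + (-b) *\<^sub>R v = 0") (auto intro: less_imp_le)
  also have "\<dots> = a^2 * b^2 - 2 * a * b * ((M *v u) \<bullet> v) + b^2 * a^2"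
    by (subst Q_expand[OF S u v]) (simp add: a2 b2)
  finally have "2 * (a * b) * ((M *v u) \<bullet> v) \<le> 2 * (a * b) * (a * b)"
    by (simp add: power2_eq_square algebra_simps)
  then have "(M *v u) \<bullet> v \<le> a * b" using ap by simp
  then show ?thesis by (simp add: a_def b_def mult.commute)
qed



lemma inv_exists:
  assumes pd: "\<forall>t. blockvec blk i t \<and> t \<noteq> 0 \<longrightarrow> (M *v t) \<bullet> t > 0"
    and s: "blockvec blk i s"
  shows "\<exists>!v. blockvec blk i v \<and> bproj blk i (M *v v) = s"
proof -
  define P where "P = bproj blk i"
  define G where "G = (\<lambda>w. P (M *v P w) + (w - P w))"
  have lP: "linear P" unfolding P_def by (rule bproj_linear)
  have lG: "linear G" unfolding G_def
    by (intro linear_compose_add linear_compose_sub linear_id[unfolded id_def] lP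
        linear_compose[OF lP, unfolded o_def] linear_compose[OF _ lP, unfolded o_def]
        matrix_vector_mul_linear) 
  have key: "v = 0" if bv: "blockvec blk i v" and e: "P (M *v v) = 0" for v
  proof (rule ccontr)
    assume "v \<noteq> 0"
    then have "(M *v v) \<bullet> v > 0" using pd bv by auto
    moreover have "(M *v v) \<bullet> v = P (M *v v) \<bullet> v"
      using inner_block[OF bv, of "M *v v"] by (simp add: P_def)
    ultimately show False using e by simp
  qed
  have "inj G"
  proof (rule linear_injective_0[OF lG, THEN iffD2], intro allI impI)
    fix w assume g: "G w = 0"
    have off: "w - P w = 0"
    proof -
      have "(w - P w) $ j = 0" for j
      proof -
        have "G w $ j = 0" using g by simp
        then show ?thesis
          by (cases "blk j = i") (auto simp: G_def P_def bproj_def)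
      qed
      then show ?thesis by (simp add: vec_eq_iff)
    qed
    then have wP: "w = P w" by simp
    have "P (M *v P w) = 0" using g off by (simp add: G_def)
    then have "P w = 0" using key[of "P w"] by (simp add: P_def bproj_block)
    then show "w = 0" using wP by simp
  qed
  then have "surj G" using lG linear_injective_imp_surjective by blast
  then obtain w where w: "G w = s" by (metis surjD)
  have off: "w - P w = 0"
  proof -
    have "(w - P w) $ j = 0" for j
    proof (cases "blk j = i")
      case True then show ?thesis by (simp add: P_def bproj_def)
    next
      case False
      have "G w $ j = 0" using w s False by (simp add: blockvec_def)
      then show ?thesis using False by (simp add: G_def P_def bproj_def)
    qed
    then show ?thesis by (simp add: vec_eq_iff)
  qed
  then have wP: "w = P w" by simp
  have bw: "blockvec blk i w" using wP by (metis P_def bproj_block)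
  have ex: "blockvec blk i w \<and> bproj blk i (M *v w) = s"
    using w off wP bw by (simp add: G_def P_def)
  show ?thesis
  proof (rule ex1I[of _ w])
    show "blockvec blk i w \<and> bproj blk i (M *v w) = s" by (rule ex)
  next
    fix v assume v: "blockvec blk i v \<and> bproj blk i (M *v v) = s"
    have "bproj blk i (M *v (v - w)) = 0"
      using v ex by (simp add: matrix_vector_mult_diff_distrib bproj_diff)
    then have "v - w = 0" using key[of "v - w"] v bw by (simp add: P_def blockvec_diff)
    then show "v = w" by simp
  qed
qed

lemma bdual_le:
  assumes S: "symblk blk i (B i)" and pd: "\<forall>t. blockvec blk i t \<and> t \<noteq> 0 \<longrightarrow> (B i *v t) \<bullet> t > 0"
    and s: "blockvec blk i s" and t: "blockvec blk i t"
  shows "s \<bullet> t \<le> bdual blk B i s * bnorm B i t"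
proof -
  define v where "v = (THE v. blockvec blk i v \<and> bproj blk i (B i *v v) = s)"
  have v: "blockvec blk i v \<and> bproj blk i (B i *v v) = s"
    unfolding v_def by (rule theI'[OF inv_exists[OF pd s]])
  have "bdual blk B i s = sqrt (v \<bullet> s)" by (simp add: bdual_def v_def)
  also have "v \<bullet> s = (B i *v v) \<bullet> v"
    using v inner_block[of blk i v "B i *v v"] by (auto simp: inner_commute)
  finally have d: "bdual blk B i s = sqrt ((B i *v v) \<bullet> v)" .
  have "s \<bullet> t = (B i *v v) \<bullet> t"
    using v inner_block[OF t, of "B i *v v"] by auto
  also have "\<dots> \<le> sqrt ((B i *v v) \<bullet> v) * sqrt ((B i *v t) \<bullet> t)"
    by (rule Q_cs[OF S _ t pd]) (use v in auto)
  finally show ?thesis by (simp add: d bnorm_def)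
qed



lemma bnorm_scale: "bnorm B i (a *\<^sub>R t) = \<bar>a\<bar> * bnorm B i t"
proof -
  have "(B i *v (a *\<^sub>R t)) \<bullet> (a *\<^sub>R t) = a^2 * ((B i *v t) \<bullet> t)"
    by (simp add: matrix_vector_mult_scaleR power2_eq_square)
  then show ?thesis by (simp add: bnorm_def real_sqrt_mult)
qed

lemma Q_nonneg: "(\<forall>t. blockvec blk i t \<and> t \<noteq> 0 \<longrightarrow> (M *v t) \<bullet> t > 0) \<Longrightarrow> blockvec blk i t
   \<Longrightarrow> (M *v t) \<bullet> t \<ge> 0"
  by (cases "t = 0") (auto intro: less_imp_le)

lemma bnorm_sq: "(\<forall>t. blockvec blk i t \<and> t \<noteq> 0 \<longrightarrow> (B i *v t) \<bullet> t > 0) \<Longrightarrow> blockvec blk i t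
   \<Longrightarrow> (bnorm B i t)^2 = (B i *v t) \<bullet> t"
proof -
  assume pd: "\<forall>t. blockvec blk i t \<and> t \<noteq> 0 \<longrightarrow> (B i *v t) \<bullet> t > 0" and t: "blockvec blk i t"
  have "(B i *v t) \<bullet> t \<ge> 0" proof (cases "t = 0")
    case False then show ?thesis using pd t by (meson less_imp_le)
  qed simp
  then show ?thesis unfolding bnorm_def by (rule real_sqrt_pow2)
qed

lemma descent:
  fixes f :: "real^'N::finite \<Rightarrow> real"
  assumes S: "symblk blk i (B i)" and pd: "\<forall>t. blockvec blk i t \<and> t \<noteq> 0 \<longrightarrow> (B i *v t) \<bullet> t > 0"
    and fg: "\<forall>x. (f has_derivative (\<lambda>h. grad x \<bullet> h)) (at x)"
    and lip: "\<forall>x t. blockvec blk i t \<longrightarrow>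
                  bdual blk B i (bproj blk i (grad (x + t)) - bproj blk i (grad x)) \<le> Li * bnorm B i t"
    and t: "blockvec blk i t"
  shows "f (x + t) \<le> f x + bproj blk i (grad x) \<bullet> t + Li / 2 * (bnorm B i t)^2"
proof -
  define bn where "bn = bnorm B i t"
  have bn0: "bn \<ge> 0" using Q_nonneg[OF pd t] by (simp add: bn_def bnorm_def)
  define \<phi> where "\<phi> = (\<lambda>\<tau>::real. f (x + \<tau> *\<^sub>R t) - \<tau> * (grad x \<bullet> t) - Li / 2 * \<tau>^2 * bn^2)"
  have "\<phi> 1 \<le> \<phi> 0"
  proof (rule DERIV_nonpos_imp_nonincreasing[of 0 1 \<phi>])
    fix \<tau> :: real assume \<tau>: "0 \<le> \<tau>" "\<tau> \<le> 1"
    have d1: "((\<lambda>\<tau>. f (x + \<tau> *\<^sub>R t)) has_derivative (\<lambda>h. grad (x + \<tau> *\<^sub>R t) \<bullet> (h *\<^sub>R t))) (at \<tau>)"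
      by (rule has_derivative_compose[of "\<lambda>\<tau>. x + \<tau> *\<^sub>R t" _ _ _ f, unfolded o_def])
         (auto intro!: derivative_eq_intros fg[rule_format])
    have d2: "((\<lambda>\<tau>. f (x + \<tau> *\<^sub>R t)) has_field_derivative (grad (x + \<tau> *\<^sub>R t) \<bullet> t)) (at \<tau>)"
      by (rule has_derivative_imp_has_field_derivative[OF d1]) (simp add: inner_scaleR_right)
    have D: "(\<phi> has_field_derivative (grad (x + \<tau> *\<^sub>R t) \<bullet> t - grad x \<bullet> t - Li * \<tau> * bn^2)) (at \<tau>)"
      unfolding \<phi>_def by (auto intro!: derivative_eq_intros d2)
    define s where "s = bproj blk i (grad (x + \<tau> *\<^sub>R t)) - bproj blk i (grad x)"
    have bs: "blockvec blk i s" by (simp add: s_def blockvec_diff bproj_block)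
    have "grad (x + \<tau> *\<^sub>R t) \<bullet> t - grad x \<bullet> t = s \<bullet> t"
      using inner_block[OF t] by (simp add: s_def inner_diff_left)
    also have "\<dots> \<le> bdual blk B i s * bn"
      unfolding bn_def by (rule bdual_le[of blk i B, OF S pd bs t])
    also have "\<dots> \<le> (Li * bnorm B i (\<tau> *\<^sub>R t)) * bn"
      using lip[rule_format, OF blockvec_scale[OF t], of x \<tau>] bn0
      by (intro mult_right_mono) (auto simp: s_def)
    also have "\<dots> = Li * \<tau> * bn^2" using \<tau> by (simp add: bnorm_scale bn_def power2_eq_square)
    finally show "\<exists>y. (\<phi> has_real_derivative y) (at \<tau>) \<and> y \<le> 0"
      using D by (intro exI[of _ "grad (x + \<tau> *\<^sub>R t) \<bullet> t - grad x \<bullet> t - Li * \<tau> * bn^2"]) auto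
  qed simp
  then show ?thesis using inner_block[OF t, of "grad x"] by (simp add: \<phi>_def bn_def)
qed



lemma ereal_le_of_all_gt:
  fixes a m :: ereal
  assumes "\<And>r. m < ereal r \<Longrightarrow> a \<le> ereal r"
  shows "a \<le> m"
proof (rule ccontr)
  assume "\<not> a \<le> m"
  then have "m < a" by simp
  then obtain r where "m < ereal r" "ereal r < a" using ereal_dense2 by blast
  with assms show False by fastforce
qed

lemma lsc_attains_min:
  fixes h :: "'a::metric_space \<Rightarrow> ereal"
  assumes K: "compact K" "K \<noteq> {}" and cl: "\<And>r. closed {u\<in>K. h u \<le> ereal r}"
  shows "\<exists>u\<in>K. \<forall>v\<in>K. h u \<le> h v"
proof -
  define m where "m = (INF v\<in>K. h v)"
  define C where "C = (\<lambda>r. {u\<in>K. h u \<le> ereal r})"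
  have ne: "C r \<noteq> {}" if "m < ereal r" for r
  proof -
    have "\<exists>v\<in>K. h v < ereal r" using that unfolding m_def INF_less_iff .
    then obtain v where "v \<in> K" "h v < ereal r" by blast
    then show ?thesis by (auto simp: C_def)
  qed
  have mono: "C r \<subseteq> C r'" if "r \<le> r'" for r r' using that by (auto simp: C_def order_trans)
  have "K \<inter> \<Inter>(C ` {r. m < ereal r}) \<noteq> {}"
  proof (rule compact_imp_fip[OF K(1)])
    show "\<And>T. T \<in> C ` {r. m < ereal r} \<Longrightarrow> closed T" using cl by (auto simp: C_def)
  next
    fix F' assume F': "finite F'" "F' \<subseteq> C ` {r. m < ereal r}"
    then obtain R where R: "R \<subseteq> {r. m < ereal r}" "finite R" "F' = C ` R"
      by (meson finite_subset_image)
    show "K \<inter> \<Inter>F' \<noteq> {}"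
    proof (cases "R = {}")
      case True then show ?thesis using R K by auto
    next
      case False
      have "Min R \<in> R" using False R by simp
      then have "C (Min R) \<noteq> {}" using ne R by auto
      moreover have "C (Min R) \<subseteq> K \<inter> \<Inter>F'"
      proof -
        have "C (Min R) \<subseteq> C r" if "r \<in> R" for r using that R(2) by (intro mono) simp
        moreover have "C (Min R) \<subseteq> K" by (auto simp: C_def)
        ultimately show ?thesis using R(3) by blast
      qed
      ultimately show ?thesis by blast
    qed
  qed
  then obtain u where u: "u \<in> K" "\<And>r. m < ereal r \<Longrightarrow> u \<in> C r" by blast
  have "h u \<le> m" by (rule ereal_le_of_all_gt) (use u in \<open>auto simp: C_def\<close>)
  then show ?thesis using u(1) unfolding m_def by (meson INF_lower order_trans)
qed



lemma ereal_add_le_iff: "ereal a + y \<le> ereal r \<longleftrightarrow> y \<le> ereal (r - a)"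
  by (cases y) auto

lemma sublevel_closed:
  fixes \<phi> :: "'a::euclidean_space \<Rightarrow> ereal" and g :: "'a \<Rightarrow> real"
  assumes E: "closed {(u,r). u \<in> S \<and> \<phi> u \<le> ereal r}" and K: "closed K" "K \<subseteq> S"
    and g: "continuous_on UNIV g"
  shows "closed {u\<in>K. ereal (g u) + \<phi> u \<le> ereal r}"
proof -
  have eq: "{u\<in>K. ereal (g u) + \<phi> u \<le> ereal r} = K \<inter> (\<lambda>u. (u, r - g u)) -` {(u,r). u \<in> S \<and> \<phi> u \<le> ereal r}"
    using K(2) by (auto simp: ereal_add_le_iff)
  have "continuous_on UNIV (\<lambda>u. (u, r - g u))"
    by (intro continuous_intros g)
  then have "closed ((\<lambda>u. (u, r - g u)) -` {(u,r). u \<in> S \<and> \<phi> u \<le> ereal r})"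
    using E by (intro continuous_closed_vimage) (auto simp: continuous_on_eq_continuous_at)
  then show ?thesis unfolding eq using K(1) by blast
qed

lemma exists_min_abs:
  fixes \<phi> :: "'a::euclidean_space \<Rightarrow> ereal" and q :: "'a \<Rightarrow> real"
  assumes Sc: "closed S" and Sv: "convex S"
    and nm: "\<forall>t\<in>S. \<phi> t \<noteq> -\<infinity>" and t0: "t0 \<in> S" "\<phi> t0 \<noteq> \<infinity>"
    and cv: "\<forall>u\<in>S. \<forall>v\<in>S. \<forall>a. 0\<le>a \<and> a\<le>1 \<longrightarrow>
               \<phi> (a *\<^sub>R u + (1-a) *\<^sub>R v) \<le> ereal a * \<phi> u + ereal (1-a) * \<phi> v"
    and E: "closed {(u,r). u \<in> S \<and> \<phi> u \<le> ereal r}"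
    and qc: "continuous_on UNIV q"
    and co: "\<alpha> > 0" "\<forall>t\<in>S. \<alpha> * (norm t)^2 - \<beta> * norm t \<le> q t"
  shows "\<exists>t\<in>S. \<forall>s\<in>S. ereal (q t) + \<phi> t \<le> ereal (q s) + \<phi> s"
proof -
  define K1 where "K1 = S \<inter> cball t0 1"
  have K1c: "compact K1" unfolding K1_def using Sc
    by (metis compact_Int_closed compact_cball inf_commute)
  have K1ne: "K1 \<noteq> {}" using t0 by (auto simp: K1_def)
  have "closed {u\<in>K1. ereal ((\<lambda>_. 0) u) + \<phi> u \<le> ereal r}" for r
    by (rule sublevel_closed[OF E]) (auto simp: K1_def Sc compact_imp_closed K1c)
  then obtain u1 where u1: "u1 \<in> K1" "\<forall>v\<in>K1. \<phi> u1 \<le> \<phi> v"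
    using lsc_attains_min[OF K1c K1ne, of \<phi>] by auto
  have "\<phi> u1 \<le> \<phi> t0" using u1 t0 by (auto simp: K1_def)
  then obtain c where c: "\<phi> u1 = ereal c" using nm u1(1) t0(2) unfolding K1_def
    by (cases "\<phi> u1") auto
  obtain P0 where P0: "\<phi> t0 = ereal P0" using t0 nm by (cases "\<phi> t0") auto
  have cP0: "c \<le> P0" using \<open>\<phi> u1 \<le> \<phi> t0\<close> c P0 by simp
  define Kc where "Kc = P0 - c"
  have Kc0: "Kc \<ge> 0" using cP0 by (simp add: Kc_def)
  have lb: "ereal (c - Kc * norm (t - t0)) \<le> \<phi> t" if tS: "t \<in> S" for t
  proof (cases "norm (t - t0) \<le> 1")
    case True
    then have "t \<in> K1" using tS by (auto simp: K1_def dist_norm norm_minus_commute)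
    then have "ereal c \<le> \<phi> t" using u1 c by auto
    moreover have "c - Kc * norm (t - t0) \<le> c" using Kc0 by simp
    ultimately show ?thesis by (meson ereal_less_eq(3) order_trans)
  next
    case False
    define d where "d = norm (t - t0)"
    have d1: "d > 1" using False by (simp add: d_def)
    define a where "a = 1 / d"
    have a: "0 \<le> a" "a \<le> 1" using d1 by (auto simp: a_def)
    define p where "p = a *\<^sub>R t + (1 - a) *\<^sub>R t0"
    have pS: "p \<in> S" unfolding p_def using Sv tS t0(1) a by (simp add: convex_def)
    have "p - t0 = a *\<^sub>R (t - t0)" by (simp add: p_def algebra_simps)
    then have "norm (p - t0) = 1" using d1 by (auto simp: a_def d_def)
    then have "p \<in> K1" using pS by (auto simp: K1_def dist_norm norm_minus_commute)
    then have "ereal c \<le> \<phi> p" using u1 c by auto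
    also have "\<phi> p \<le> ereal a * \<phi> t + ereal (1-a) * \<phi> t0"
      using cv tS t0 a unfolding p_def by blast
    finally have *: "ereal c \<le> ereal a * \<phi> t + ereal (1 - a) * ereal P0" by (simp add: P0)
    show ?thesis
    proof (cases "\<phi> t")
      case (real y)
      then have "c \<le> a * y + (1 - a) * P0" using * by simp
      then have "d * c \<le> d * (a * y + (1 - a) * P0)" using d1 by simp
      also have "\<dots> = y + (d - 1) * P0" using d1 by (simp add: a_def algebra_simps)
      finally have "d * c \<le> y + (d - 1) * P0" .
      then have "c - Kc * d \<le> y" using cP0 by (simp add: Kc_def algebra_simps)
      then show ?thesis using real by (simp add: d_def)
    next
      case PInf then show ?thesis by simp
    next
      case MInf then show ?thesis using nm tS by simp
    qed
  qed
  define \<gamma> where "\<gamma> = \<bar>\<beta>\<bar> + Kc"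
  define \<delta> where "\<delta> = c - Kc * norm t0"
  define M0 where "M0 = q t0 + P0"
  have V_lb: "ereal (\<alpha> * (norm t)^2 - \<gamma> * norm t + \<delta>) \<le> ereal (q t) + \<phi> t" if tS: "t \<in> S" for t
  proof -
    have "norm (t - t0) \<le> norm t + norm t0" by (rule norm_triangle_ineq4)
    then have "Kc * norm (t - t0) \<le> Kc * (norm t + norm t0)" using Kc0 by (rule mult_left_mono)
    moreover have "\<beta> * norm t \<le> \<bar>\<beta>\<bar> * norm t" by (simp add: mult_right_mono)
    ultimately have "\<alpha> * (norm t)^2 - \<gamma> * norm t + \<delta> \<le> q t + (c - Kc * norm (t - t0))"
      using co(2) tS by (simp add: \<gamma>_def \<delta>_def algebra_simps) (smt (verit, best))
    then have "ereal (\<alpha> * (norm t)^2 - \<gamma> * norm t + \<delta>) \<le> ereal (q t) + ereal (c - Kc * norm (t - t0))"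
      by simp
    also have "\<dots> \<le> ereal (q t) + \<phi> t" by (rule add_left_mono[OF lb[OF tS]])
    finally show ?thesis .
  qed
  define R where "R = max (norm t0) ((\<gamma> + \<bar>M0 - \<delta>\<bar>) / \<alpha> + 1)"
  have far: "ereal M0 < ereal (q s) + \<phi> s" if sS: "s \<in> S" and sR: "norm s > R" for s
  proof -
    define r where "r = norm s"
    have r1: "r \<ge> (\<gamma> + \<bar>M0 - \<delta>\<bar>) / \<alpha> + 1" using sR by (simp add: r_def R_def)
    then have "\<alpha> * r \<ge> \<gamma> + \<bar>M0 - \<delta>\<bar> + \<alpha>" using co(1) by (simp add: field_simps)
    then have h1: "\<alpha> * r - \<gamma> \<ge> \<bar>M0 - \<delta>\<bar> + \<alpha>" by simp
    have rge1: "r \<ge> 1" using r1 co(1) by (smt (verit) divide_nonneg_pos abs_ge_zero sR norm_ge_zero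
        \<gamma>_def Kc0)
    have "r * (\<alpha> * r - \<gamma>) \<ge> 1 * (\<alpha> * r - \<gamma>)"
      using h1 rge1 co(1) by (intro mult_right_mono) auto
    then have "\<alpha> * r^2 - \<gamma> * r + \<delta> > M0" using h1 co(1)
      by (simp add: power2_eq_square algebra_simps)
    then have "ereal M0 < ereal (\<alpha> * (norm s)^2 - \<gamma> * norm s + \<delta>)" by (simp add: r_def)
    also have "\<dots> \<le> ereal (q s) + \<phi> s" by (rule V_lb[OF sS])
    finally show ?thesis .
  qed
  define K2 where "K2 = S \<inter> cball 0 R"
  have K2c: "compact K2" unfolding K2_def using Sc
    by (metis compact_Int_closed compact_cball inf_commute)
  have t0K2: "t0 \<in> K2" using t0 by (auto simp: K2_def R_def)
  have "closed {u\<in>K2. ereal (q u) + \<phi> u \<le> ereal r}" for r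
    by (rule sublevel_closed[OF E]) (auto simp: K2_def Sc compact_imp_closed K2c qc)
  then obtain u where u: "u \<in> K2" "\<forall>v\<in>K2. ereal (q u) + \<phi> u \<le> ereal (q v) + \<phi> v"
    using lsc_attains_min[OF K2c, of "\<lambda>u. ereal (q u) + \<phi> u"] t0K2 by blast
  have ut0: "ereal (q u) + \<phi> u \<le> ereal M0" using u t0K2 by (force simp: M0_def P0)
  show ?thesis
  proof (intro bexI[of _ u] ballI)
    fix s assume sS: "s \<in> S"
    show "ereal (q u) + \<phi> u \<le> ereal (q s) + \<phi> s"
    proof (cases "norm s \<le> R")
      case True then show ?thesis using u sS by (auto simp: K2_def)
    next
      case False then show ?thesis using far[OF sS] ut0 by simp
    qed
  next
    show "u \<in> S" using u by (simp add: K2_def)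
  qed
qed



lemma blockvec_iff: "blockvec blk i t \<longleftrightarrow> bproj blk i t = t"
  by (auto simp: blockvec_def bproj_def vec_eq_iff)

lemma closed_block: "closed {t. blockvec blk i t}"
proof -
  have "continuous_on UNIV (bproj blk i)"
    by (rule linear_continuous_on) (metis bproj_linear linear_conv_bounded_linear)
  then have "closed {t. bproj blk i t = id t}"
    by (intro closed_Collect_eq) (auto intro: continuous_on_id)
  then show ?thesis by (simp add: blockvec_iff)
qed

lemma convex_block: "convex {t. blockvec blk i t}"
  by (auto simp: convex_def intro!: blockvec_add blockvec_scale)

lemma coercive_Q:
  assumes pd: "\<forall>t. blockvec blk i t \<and> t \<noteq> 0 \<longrightarrow> (M *v t) \<bullet> t > 0"
  shows "\<exists>\<mu>>0. \<forall>t. blockvec blk i t \<longrightarrow> \<mu> * (norm t)^2 \<le> (M *v t) \<bullet> t"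
proof -
  define K where "K = {t. blockvec blk i t} \<inter> sphere 0 1"
  have Kc: "compact K" unfolding K_def
    by (metis closed_block compact_Int_closed compact_sphere inf_commute)
  show ?thesis
  proof (cases "K = {}")
    case True
    have "t = 0" if "blockvec blk i t" for t
    proof (rule ccontr)
      assume "t \<noteq> 0"
      then have "(1 / norm t) *\<^sub>R t \<in> K" using that by (auto simp: K_def blockvec_scale)
      then show False using True by auto
    qed
    then show ?thesis by (intro exI[of _ 1]) force
  next
    case False
    have "continuous_on K (\<lambda>t. (M *v t) \<bullet> t)" by (intro continuous_intros)
    then obtain t1 where t1: "t1 \<in> K" "\<forall>y\<in>K. (M *v t1) \<bullet> t1 \<le> (M *v y) \<bullet> y"
      using continuous_attains_inf[OF Kc False] by blast
    define \<mu> where "\<mu> = (M *v t1) \<bullet> t1"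
    have mu: "\<mu> > 0" using t1(1) pd by (auto simp: K_def \<mu>_def)
    have "\<mu> * (norm t)^2 \<le> (M *v t) \<bullet> t" if bt: "blockvec blk i t" for t
    proof (cases "t = 0")
      case True then show ?thesis by simp
    next
      case False
      define w where "w = (1 / norm t) *\<^sub>R t"
      have "w \<in> K" using False bt by (auto simp: K_def w_def blockvec_scale)
      then have "\<mu> \<le> (M *v w) \<bullet> w" using t1 by (simp add: \<mu>_def)
      also have "(M *v w) \<bullet> w = ((M *v t) \<bullet> t) / (norm t)^2"
        by (simp add: w_def matrix_vector_mult_scaleR power2_eq_square)
      finally show ?thesis using False by (simp add: field_simps)
    qed
    then show ?thesis using mu by blast
  qed
qed



lemma Tblk_spec:
  fixes B :: "nat \<Rightarrow> real^'N::finite^'N"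
  assumes S: "symblk blk i (B i)" and pd: "\<forall>t. blockvec blk i t \<and> t \<noteq> 0 \<longrightarrow> (B i *v t) \<bullet> t > 0"
    and Lp: "L i > 0"
    and pr: "(\<forall>t. blockvec blk i t \<longrightarrow> Psi i t \<noteq> -\<infinity>) \<and> (\<exists>t. blockvec blk i t \<and> Psi i t \<noteq> \<infinity>)"
    and cvx: "\<forall>u v a. blockvec blk i u \<and> blockvec blk i v \<and> 0 \<le> a \<and> a \<le> 1 \<longrightarrow>
                  Psi i (a *\<^sub>R u + (1 - a) *\<^sub>R v) \<le> ereal a * Psi i u + ereal (1 - a) * Psi i v"
    and cl: "closed {(u, r::real). blockvec blk i u \<and> Psi i u \<le> ereal r}"
  shows "blockvec blk i (Tblk blk B L grad Psi i x)"
proof -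
  define c where "c = bproj blk i x"
  have bc: "blockvec blk i c" by (simp add: c_def bproj_block)
  define g where "g = bproj blk i (grad x)"
  define \<phi> where "\<phi> = (\<lambda>t. Psi i (c + t))"
  define q where "q = (\<lambda>t. g \<bullet> t + L i / 2 * (bnorm B i t)^2)"
  define SS where "SS = {t. blockvec blk i t}"
  have V: "Vblk blk B L grad Psi i x t = ereal (q t) + \<phi> t" for t
    by (simp add: Vblk_def q_def \<phi>_def g_def c_def)
  obtain t' where t': "blockvec blk i t'" "Psi i t' \<noteq> \<infinity>" using pr by blast
  define t0 where "t0 = t' - c"
  have t0: "t0 \<in> SS" "\<phi> t0 \<noteq> \<infinity>" using t' bc by (auto simp: t0_def SS_def \<phi>_def blockvec_diff)
  have nm: "\<forall>t\<in>SS. \<phi> t \<noteq> -\<infinity>" using pr bc by (auto simp: SS_def \<phi>_def blockvec_add)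
  have cv: "\<forall>u\<in>SS. \<forall>v\<in>SS. \<forall>a. 0\<le>a \<and> a\<le>1 \<longrightarrow>
               \<phi> (a *\<^sub>R u + (1-a) *\<^sub>R v) \<le> ereal a * \<phi> u + ereal (1-a) * \<phi> v"
  proof (intro ballI allI impI)
    fix u v and a :: real assume u: "u \<in> SS" and v: "v \<in> SS" and a: "0\<le>a \<and> a\<le>1"
    have "c + (a *\<^sub>R u + (1-a) *\<^sub>R v) = a *\<^sub>R (c + u) + (1-a) *\<^sub>R (c + v)"
      by (simp add: algebra_simps)
    then show "\<phi> (a *\<^sub>R u + (1-a) *\<^sub>R v) \<le> ereal a * \<phi> u + ereal (1-a) * \<phi> v"
      using cvx u v a bc by (simp add: \<phi>_def SS_def blockvec_add)
  qed
  have E: "closed {(u,r). u \<in> SS \<and> \<phi> u \<le> ereal r}"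
  proof -
    have eq: "{(u,r). u \<in> SS \<and> \<phi> u \<le> ereal r} =
       (\<lambda>p. (c + fst p, snd p)) -` {(u, r::real). blockvec blk i u \<and> Psi i u \<le> ereal r}"
      using bc by (auto simp: SS_def \<phi>_def blockvec_add)
         (metis add_diff_cancel_left' blockvec_diff)
    have "continuous_on UNIV (\<lambda>p::((real^'N) \<times> real). (c + fst p, snd p))"
      by (intro continuous_intros)
    then show ?thesis unfolding eq using cl
      by (intro continuous_closed_vimage) (auto simp: continuous_on_eq_continuous_at)
  qed
  have qc: "continuous_on UNIV q" unfolding q_def bnorm_def by (intro continuous_intros)
  obtain \<mu> where mu: "\<mu> > 0" "\<forall>t. blockvec blk i t \<longrightarrow> \<mu> * (norm t)^2 \<le> (B i *v t) \<bullet> t"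
    using coercive_Q[OF pd] by blast
  have co: "\<forall>t\<in>SS. (L i / 2 * \<mu>) * (norm t)^2 - norm g * norm t \<le> q t"
  proof
    fix t assume "t \<in> SS"
    then have bt: "blockvec blk i t" by (simp add: SS_def)
    have "- (norm g * norm t) \<le> g \<bullet> t" using norm_cauchy_schwarz[of "-g" t] by simp
    moreover have "L i / 2 * (\<mu> * (norm t)^2) \<le> L i / 2 * (bnorm B i t)^2"
      using mu bt Lp bnorm_sq[of blk i B, OF pd bt] by (intro mult_left_mono) auto
    ultimately show "(L i / 2 * \<mu>) * (norm t)^2 - norm g * norm t \<le> q t"
      by (simp add: q_def algebra_simps)
  qed
  have Sc: "closed SS" using closed_block by (simp add: SS_def)
  have Sv: "convex SS" using convex_block by (simp add: SS_def)
  obtain tm where tm: "tm \<in> SS" "\<forall>s\<in>SS. ereal (q tm) + \<phi> tm \<le> ereal (q s) + \<phi> s"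
    using exists_min_abs[OF Sc Sv nm t0 cv E qc _ co] mu Lp by auto
  have uniq: "t1 = t2" if t1: "t1 \<in> SS" "\<forall>s\<in>SS. ereal (q t1) + \<phi> t1 \<le> ereal (q s) + \<phi> s"
     and t2: "t2 \<in> SS" "\<forall>s\<in>SS. ereal (q t2) + \<phi> t2 \<le> ereal (q s) + \<phi> s" for t1 t2
  proof (rule ccontr)
    assume ne: "t1 \<noteq> t2"
    have b1: "blockvec blk i t1" and b2: "blockvec blk i t2" using t1 t2 by (auto simp: SS_def)
    have fin: "\<phi> t \<noteq> \<infinity>" if "t \<in> SS" "\<forall>s\<in>SS. ereal (q t) + \<phi> t \<le> ereal (q s) + \<phi> s" for t
    proof
      assume "\<phi> t = \<infinity>"
      then have "ereal (q t) + \<phi> t = \<infinity>" by simp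
      moreover have "ereal (q t) + \<phi> t \<le> ereal (q t0) + \<phi> t0" using that t0 by blast
      ultimately show False using t0(2) by (cases "\<phi> t0") auto
    qed
    obtain p1 where p1: "\<phi> t1 = ereal p1" using fin[OF t1] nm t1(1) by (cases "\<phi> t1") auto
    obtain p2 where p2: "\<phi> t2 = ereal p2" using fin[OF t2] nm t2(1) by (cases "\<phi> t2") auto
    have "ereal (q t1) + \<phi> t1 \<le> ereal (q t2) + \<phi> t2" using t1(2) t2(1) by blast
    moreover have "ereal (q t2) + \<phi> t2 \<le> ereal (q t1) + \<phi> t1" using t2(2) t1(1) by blast
    ultimately have eq12: "q t1 + p1 = q t2 + p2" using p1 p2 by simp
    define m where "m = (1/2::real) *\<^sub>R t1 + (1 - 1/2) *\<^sub>R t2"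
    have mS: "m \<in> SS" using t1 t2 Sv by (simp add: m_def convex_def)
    have bm: "blockvec blk i m" using mS by (simp add: SS_def)
    have "\<phi> m \<le> ereal (1/2) * ereal p1 + ereal (1 - 1/2) * ereal p2"
      using cv[rule_format, OF t1(1) t2(1), of "1/2"] p1 p2 unfolding m_def by simp
    then have phim: "\<phi> m \<le> ereal (p1/2 + p2/2)" by simp
    define Q where "Q = (\<lambda>t. (B i *v t) \<bullet> t)"
    have Qm: "Q m = (1/2)^2 * Q t1 + 2 * (1/2) * (1/2) * ((B i *v t1) \<bullet> t2) + (1/2)^2 * Q t2"
      unfolding Q_def m_def by (subst Q_expand[OF S b1 b2]) simp
    have "t1 - t2 \<noteq> 0" using ne by simp
    then have "0 < Q (1 *\<^sub>R t1 + (-1) *\<^sub>R t2)" using pd b1 b2 by (simp add: Q_def blockvec_diff)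
    also have "Q (1 *\<^sub>R t1 + (-1) *\<^sub>R t2) = Q t1 - 2 * ((B i *v t1) \<bullet> t2) + Q t2"
      unfolding Q_def by (subst Q_expand[OF S b1 b2]) simp
    finally have "Q m < (Q t1 + Q t2) / 2" using Qm by (simp add: power2_eq_square)
    then have lt: "L i / 2 * Q m < L i / 2 * ((Q t1 + Q t2) / 2)" using Lp by simp
    have qQ: "q t = g \<bullet> t + L i / 2 * Q t" if "blockvec blk i t" for t
      using bnorm_sq[of blk i B, OF pd that] by (simp add: q_def Q_def)
    have gm: "g \<bullet> m = (g \<bullet> t1 + g \<bullet> t2) / 2" by (simp add: m_def inner_add_right)
    have "q m < (q t1 + q t2) / 2"
      using qQ[OF b1] qQ[OF b2] qQ[OF bm] gm lt
        distrib_left[of "L i / 2" "Q t1 / 2" "Q t2 / 2"] by (simp add: add_divide_distrib)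
    then have lt2: "q m + (p1/2 + p2/2) < q t1 + p1" using eq12 by simp
    have "ereal (q m) + \<phi> m \<le> ereal (q m) + ereal (p1/2 + p2/2)" by (rule add_left_mono[OF phim])
    also have "\<dots> < ereal (q t1) + \<phi> t1" using lt2 p1 by simp
    finally have "ereal (q m) + \<phi> m < ereal (q t1) + \<phi> t1" .
    moreover have "ereal (q t1) + \<phi> t1 \<le> ereal (q m) + \<phi> m" using t1 mS by blast
    ultimately show False by simp
  qed
  have ex1: "\<exists>!t. blockvec blk i t \<and> (\<forall>s. blockvec blk i s \<longrightarrow> Vblk blk B L grad Psi i x t \<le> Vblk blk B L grad Psi i x s)"
  proof (rule ex1I[of _ tm])
    show "blockvec blk i tm \<and> (\<forall>s. blockvec blk i s \<longrightarrow> Vblk blk B L grad Psi i x tm \<le> Vblk blk B L grad Psi i x s)"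
      using tm by (simp add: V SS_def)
  next
    fix t assume "blockvec blk i t \<and> (\<forall>s. blockvec blk i s \<longrightarrow> Vblk blk B L grad Psi i x t \<le> Vblk blk B L grad Psi i x s)"
    then show "t = tm" using uniq tm by (simp add: V SS_def)
  qed
  show ?thesis using theI'[OF ex1] unfolding Tblk_def by blast
qed



lemma ucdc_prefix: "(\<forall>j<k. idx j = idx' j) \<Longrightarrow> ucdc blk B L grad Psi x0 idx k = ucdc blk B L grad Psi x0 idx' k"
  by (induction k) auto

lemma sum_nminf: "(\<forall>j\<in>A. a j \<noteq> (-\<infinity>::ereal)) \<Longrightarrow> sum a A \<noteq> -\<infinity>"
  by (induction A rule: infinite_finite_induct) auto

lemma bproj_sum_blocks:
  assumes tb: "\<forall>i<n. blockvec blk i (t i)" and j: "j < n"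
  shows "bproj blk j (\<Sum>l<n. t l) = t j"
proof -
  have "bproj blk j (\<Sum>l<n. t l) = (\<Sum>l<n. bproj blk j (t l))" by (rule bproj_sum)
  also have "\<dots> = (\<Sum>l<n. if l = j then t j else 0)"
    using tb by (intro sum.cong refl) (auto simp: bproj_same bproj_other)
  also have "\<dots> = t j" using j by simp
  finally show ?thesis .
qed

lemma decomp1:
  assumes tb: "\<forall>i<n. blockvec blk i (t i)" and i: "i < n"
  shows "Psi_sum n blk Psi (x + t i) = Psi i (bproj blk i x + t i) + (\<Sum>j\<in>{..<n}-{i}. Psi j (bproj blk j x))"
proof -
  have "Psi_sum n blk Psi (x + t i) = Psi i (bproj blk i (x + t i)) + (\<Sum>j\<in>{..<n}-{i}. Psi j (bproj blk j (x + t i)))"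
    unfolding Psi_sum_def using i by (subst sum.remove[of _ i]) auto
  also have "(\<Sum>j\<in>{..<n}-{i}. Psi j (bproj blk j (x + t i))) = (\<Sum>j\<in>{..<n}-{i}. Psi j (bproj blk j x))"
    using tb i by (intro sum.cong refl) (auto simp: bproj_add bproj_other)
  finally show ?thesis using tb i by (simp add: bproj_add bproj_same)
qed

lemma decomp2:
  assumes tb: "\<forall>i<n. blockvec blk i (t i)"
  shows "Psi_sum n blk Psi (x + (\<Sum>l<n. t l)) = (\<Sum>j<n. Psi j (bproj blk j x + t j))"
  unfolding Psi_sum_def using tb by (intro sum.cong refl) (simp add: bproj_add bproj_sum_blocks)

lemma decomp_grad:
  assumes tb: "\<forall>i<n. blockvec blk i (t i)"
  shows "g \<bullet> (\<Sum>l<n. t l) = (\<Sum>j<n. bproj blk j g \<bullet> t j)"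
  unfolding inner_sum_right using tb by (intro sum.cong refl) (simp add: inner_block[symmetric])

lemma decomp_normL:
  assumes tb: "\<forall>i<n. blockvec blk i (t i)"
  shows "normL_sq n blk B L (\<Sum>l<n. t l) = (\<Sum>j<n. L j * (bnorm B j (t j))^2)"
  unfolding normL_sq_def using tb by (intro sum.cong refl) (simp add: bproj_sum_blocks)



theorem lemma2:
  fixes n :: nat and blk :: "'N::finite \<Rightarrow> nat" and B :: "nat \<Rightarrow> real^'N^'N"
    and L :: "nat \<Rightarrow> real" and f :: "real^'N \<Rightarrow> real" and grad :: "real^'N \<Rightarrow> real^'N"
    and Psi :: "nat \<Rightarrow> real^'N \<Rightarrow> ereal" and x0 :: "real^'N"
    and idx :: "nat \<Rightarrow> nat" and k :: nat
  assumes n_pos: "n > 0"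
    and blk_range: "\<forall>j. blk j < n"
    and B_sym: "\<forall>i<n. \<forall>j l. blk j = i \<longrightarrow> blk l = i \<longrightarrow> B i $ j $ l = B i $ l $ j"
    and B_pd: "\<forall>i<n. \<forall>t. blockvec blk i t \<and> t \<noteq> 0 \<longrightarrow> (B i *v t) \<bullet> t > 0"
    and L_pos: "\<forall>i<n. L i > 0"
    and f_convex: "convex_on UNIV f"
    and f_grad: "\<forall>x. (f has_derivative (\<lambda>h. grad x \<bullet> h)) (at x)"
    and f_lip: "\<forall>i<n. \<forall>x t. blockvec blk i t \<longrightarrow>
                  bdual blk B i (bproj blk i (grad (x + t)) - bproj blk i (grad x)) \<le> L i * bnorm B i t"
    and Psi_proper: "\<forall>i<n. (\<forall>t. blockvec blk i t \<longrightarrow> Psi i t \<noteq> -\<infinity>) \<and>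
                             (\<exists>t. blockvec blk i t \<and> Psi i t \<noteq> \<infinity>)"
    and Psi_convex: "\<forall>i<n. \<forall>u v a. blockvec blk i u \<and> blockvec blk i v \<and> 0 \<le> a \<and> a \<le> 1 \<longrightarrow>
                  Psi i (a *\<^sub>R u + (1 - a) *\<^sub>R v) \<le> ereal a * Psi i u + ereal (1 - a) * Psi i v"
    and Psi_closed: "\<forall>i<n. closed {(u, r::real). blockvec blk i u \<and> Psi i u \<le> ereal r}"
    and has_min: "\<exists>xs. \<forall>x. Fobj n blk f Psi xs \<le> Fobj n blk f Psi x"
    and idx_range: "\<forall>j. idx j < n"
  shows "(let xk = ucdc blk B L grad Psi x0 idx k;
              Fs = Fstar n blk f Psi;
              F = Fobj n blk f Psi
          in ereal (1 / real n) *
               (\<Sum>i<n. F (ucdc blk B L grad Psi x0 (idx(k := i)) (Suc k)) - Fs)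
             \<le> ereal (1 / real n) * (Hfun n blk B L f grad Psi xk (Tfull n blk B L grad Psi xk) - Fs)
               + ereal ((real n - 1) / real n) * (F xk - Fs))"
proof -
  define x where "x = ucdc blk B L grad Psi x0 idx k"
  define t where "t = (\<lambda>i. Tblk blk B L grad Psi i x)"
  define F where "F = Fobj n blk f Psi"
  have Sym: "symblk blk i (B i)" if "i < n" for i using B_sym that by (simp add: symblk_def)
  have tb: "\<forall>i<n. blockvec blk i (t i)"
  proof (intro allI impI)
    fix i assume i: "i < n"
    show "blockvec blk i (t i)" unfolding t_def
      by (rule Tblk_spec[of blk i B L Psi, OF Sym[OF i]]) (use i B_pd L_pos Psi_proper Psi_convex Psi_closed in auto)
  qed
  have step: "ucdc blk B L grad Psi x0 (idx(k := i)) (Suc k) = x + t i" for i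
  proof -
    have "ucdc blk B L grad Psi x0 (idx(k := i)) k = x"
      unfolding x_def by (rule ucdc_prefix) simp
    then show ?thesis by (simp add: t_def)
  qed
  have Tf: "Tfull n blk B L grad Psi x = (\<Sum>l<n. t l)" by (simp add: Tfull_def t_def)
  define a where "a = (\<lambda>j. Psi j (bproj blk j x))"
  define b where "b = (\<lambda>j. Psi j (bproj blk j x + t j))"
  define d where "d = (\<lambda>j. bproj blk j (grad x) \<bullet> t j + L j / 2 * (bnorm B j (t j))^2)"
  have a_nm: "a j \<noteq> -\<infinity>" if "j < n" for j using Psi_proper that by (simp add: a_def bproj_block)
  have b_nm: "b j \<noteq> -\<infinity>" if "j < n" for j using Psi_proper that tb
    by (simp add: b_def bproj_block blockvec_add)
  have Fi: "F (x + t i) = ereal (f (x + t i)) + (b i + (\<Sum>j\<in>{..<n}-{i}. a j))" if "i < n" for i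
    using decomp1[OF tb that, of Psi x] by (simp add: F_def Fobj_def a_def b_def)
  have Hx: "Hfun n blk B L f grad Psi x (Tfull n blk B L grad Psi x) = ereal (f x + sum d {..<n}) + sum b {..<n}"
  proof -
    have "grad x \<bullet> (\<Sum>l<n. t l) + 1/2 * normL_sq n blk B L (\<Sum>l<n. t l) = sum d {..<n}"
      using decomp_grad[OF tb, of "grad x"] decomp_normL[OF tb, of B L]
      by (simp add: d_def sum.distrib sum_distrib_left)
    then show ?thesis using decomp2[OF tb, of Psi x]
      by (simp add: Hfun_def Tf b_def add.assoc)
  qed
  have Fx: "F x = ereal (f x) + sum a {..<n}" by (simp add: F_def Fobj_def Psi_sum_def a_def)
  have desc: "f (x + t i) \<le> f x + d i" if i: "i < n" for i
  proof -
    have "f (x + t i) \<le> f x + bproj blk i (grad x) \<bullet> t i + L i / 2 * (bnorm B i (t i))^2"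
      by (rule descent[of blk i B f grad, OF Sym[OF i]]) (use i B_pd f_grad f_lip tb in auto)
    then show ?thesis by (simp add: d_def add.assoc)
  qed
  obtain xs where xs: "\<forall>y. F xs \<le> F y" using has_min by (auto simp: F_def)
  have Fs_eq: "Fstar n blk f Psi = F xs"
    unfolding Fstar_def F_def[symmetric] by (rule antisym) (auto intro: INF_lower INF_greatest xs[rule_format])
  have Fxs_nm: "F xs \<noteq> -\<infinity>"
  proof -
    have "Psi_sum n blk Psi xs \<noteq> -\<infinity>" unfolding Psi_sum_def
      by (rule sum_nminf) (use Psi_proper bproj_block in blast)
    then show ?thesis by (simp add: F_def Fobj_def)
  qed
  have Fxs_ni: "F xs \<noteq> \<infinity>"
  proof -
    define tt where "tt = (\<lambda>j. SOME u. blockvec blk j u \<and> Psi j u \<noteq> \<infinity>)"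
    have tt: "blockvec blk j (tt j) \<and> Psi j (tt j) \<noteq> \<infinity>" if "j < n" for j
      unfolding tt_def by (rule someI_ex) (use Psi_proper that in auto)
    have "\<forall>i<n. blockvec blk i (tt i)" using tt by blast
    then have "Psi_sum n blk Psi (0 + (\<Sum>l<n. tt l)) = (\<Sum>j<n. Psi j (bproj blk j 0 + tt j))"
      by (rule decomp2)
    also have "\<dots> = (\<Sum>j<n. Psi j (tt j))" using bproj_diff[of blk _ 0 0] by simp
    also have "\<dots> \<noteq> \<infinity>" using tt by (auto simp: sum_Pinfty)
    finally have "F (\<Sum>l<n. tt l) \<noteq> \<infinity>" by (simp add: F_def Fobj_def)
    then show ?thesis using xs by (metis ereal_infty_less_eq(1))
  qed
  obtain s where s: "Fstar n blk f Psi = ereal s" using Fxs_nm Fxs_ni Fs_eq by (cases "F xs") auto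
  define H where "H = Hfun n blk B L f grad Psi x (Tfull n blk B L grad Psi x)"
  have np: "real n > 0" using n_pos by simp
  have Fx_nm: "F x \<noteq> -\<infinity>" using Fx sum_nminf[of "{..<n}" a] a_nm by auto
  have Fi_nm: "F (x + t i) \<noteq> -\<infinity>" if "i < n" for i
    using Fi[OF that] b_nm[OF that] sum_nminf[of "{..<n}-{i}" a] a_nm by auto
  have main: "ereal (1 / real n) * (\<Sum>i<n. F (x + t i) - ereal s)
      \<le> ereal (1 / real n) * (H - ereal s) + ereal ((real n - 1) / real n) * (F x - ereal s)"
  proof (cases "H = \<infinity>")
    case True
    have "ereal ((real n - 1) / real n) * (F x - ereal s) \<noteq> -\<infinity>"
    proof (cases "F x")
      case (real r) then show ?thesis by simp
    next
      case PInf
      have c0: "(real n - 1) / real n \<ge> 0" using n_pos by simp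
      show ?thesis using PInf c0
        by (cases "(real n - 1) / real n = 0") (auto simp: ereal_mult_infty zero_ereal_def[symmetric])
    next
      case MInf then show ?thesis using Fx_nm by simp
    qed
    moreover have "ereal (1 / real n) * (H - ereal s) = \<infinity>" using True np by simp
    ultimately show ?thesis by simp
  next
    case Hfin: False
    have sb: "sum b {..<n} \<noteq> \<infinity>" using Hfin Hx by (auto simp: H_def)
    then have b_fin: "b j \<noteq> \<infinity>" if "j < n" for j using that by (auto simp: sum_Pinfty)
    define \<beta> where "\<beta> = (\<lambda>j. real_of_ereal (b j))"
    have b_eq: "b j = ereal (\<beta> j)" if "j < n" for j
      using b_fin[OF that] b_nm[OF that] by (cases "b j") (auto simp: \<beta>_def)
    have H_eq: "H = ereal (f x + sum d {..<n} + sum \<beta> {..<n})"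
      using Hx b_eq by (simp add: H_def)
    show ?thesis
    proof (cases "F x = \<infinity>")
      case Fxinf: True
      show ?thesis
      proof (cases "n = 1")
        case n1: True
        have e: "{..<n}-{0} = {}" using n1 by auto
        have "F (x + t 0) \<le> H"
          using Fi[of 0] desc[of 0] n1 b_eq[of 0] H_eq unfolding e by simp
        then show ?thesis using n1 Fi_nm[of 0] H_eq by (cases "F (x + t 0)") (auto simp: zero_ereal_def[symmetric])
      next
        case False
        then have "(real n - 1) / real n > 0" using n_pos by simp
        then have inf: "ereal ((real n - 1) / real n) * (F x - ereal s) = \<infinity>" using Fxinf False n_pos by (simp add: ereal_mult_infty)
        show ?thesis unfolding inf H_eq by simp
      qed
    next
      case Fxfin: False
      then have sa: "sum a {..<n} \<noteq> \<infinity>" using Fx by auto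
      then have a_fin: "a j \<noteq> \<infinity>" if "j < n" for j using that by (auto simp: sum_Pinfty)
      define \<alpha> where "\<alpha> = (\<lambda>j. real_of_ereal (a j))"
      have a_eq: "a j = ereal (\<alpha> j)" if "j < n" for j
        using a_fin[OF that] a_nm[OF that] by (cases "a j") (auto simp: \<alpha>_def)
      have Fx_eq: "F x = ereal (f x + sum \<alpha> {..<n})" using Fx a_eq by simp
      define \<phi> where "\<phi> = (\<lambda>i. f (x + t i) + \<beta> i + (sum \<alpha> {..<n} - \<alpha> i))"
      have Fi_eq: "F (x + t i) = ereal (\<phi> i)" if i: "i < n" for i
      proof -
        have "(\<Sum>j\<in>{..<n}-{i}. a j) = ereal (\<Sum>j\<in>{..<n}-{i}. \<alpha> j)" using a_eq by simp
        also have "(\<Sum>j\<in>{..<n}-{i}. \<alpha> j) = sum \<alpha> {..<n} - \<alpha> i" using i by (simp add: sum_diff1)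
        finally show ?thesis using Fi[OF i] b_eq[OF i] by (simp add: \<phi>_def)
      qed
      have "sum \<phi> {..<n} \<le> (\<Sum>i<n. f x + d i + \<beta> i + (sum \<alpha> {..<n} - \<alpha> i))"
        unfolding \<phi>_def by (intro sum_mono) (use desc in auto)
      also have "\<dots> = real n * f x + sum d {..<n} + sum \<beta> {..<n} + (real n - 1) * sum \<alpha> {..<n}"
        by (simp add: sum.distrib sum_subtractf algebra_simps)
      finally have ineq: "sum \<phi> {..<n} \<le> real n * f x + sum d {..<n} + sum \<beta> {..<n} + (real n - 1) * sum \<alpha> {..<n}" .
      have lhs: "(\<Sum>i<n. F (x + t i) - ereal s) = ereal (sum \<phi> {..<n} - real n * s)"
      proof -
        have "(\<Sum>i<n. F (x + t i) - ereal s) = (\<Sum>i<n. ereal (\<phi> i - s))"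
          using Fi_eq by (intro sum.cong) auto
        then show ?thesis by (simp add: sum_subtractf)
      qed
      have "1 / real n * (sum \<phi> {..<n} - real n * s)
          \<le> 1 / real n * (f x + sum d {..<n} + sum \<beta> {..<n} - s) + (real n - 1) / real n * (f x + sum \<alpha> {..<n} - s)"
      proof -
        have "sum \<phi> {..<n} - real n * s \<le> (f x + sum d {..<n} + sum \<beta> {..<n} - s) + (real n - 1) * (f x + sum \<alpha> {..<n} - s)"
          using ineq by (simp add: algebra_simps)
        then have "1 / real n * (sum \<phi> {..<n} - real n * s) \<le> 1 / real n * ((f x + sum d {..<n} + sum \<beta> {..<n} - s) + (real n - 1) * (f x + sum \<alpha> {..<n} - s))"
          using np by (intro mult_left_mono) auto
        moreover have "1 / real n * ((f x + sum d {..<n} + sum \<beta> {..<n} - s) + (real n - 1) * (f x + sum \<alpha> {..<n} - s))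
           = 1 / real n * (f x + sum d {..<n} + sum \<beta> {..<n} - s) + (real n - 1) / real n * (f x + sum \<alpha> {..<n} - s)"
          by (simp add: distrib_left)
        ultimately show ?thesis by linarith
      qed
      then show ?thesis unfolding lhs H_eq Fx_eq by simp
    qed
  qed
  show ?thesis using main
    unfolding Let_def F_def[symmetric] x_def[symmetric] step s H_def Tf by simp
qed


end
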